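(* Let $(K,\alpha_K)$ be a Hom-Leibniz $n$-algebra with ${}_nHL_0^\alpha(K)={}_nHL_1^\alpha(K)=0$. Then every central extension $0\to(M,\alpha_M)\to(K,\alpha_K)\xrightarrow{\pi}(L,\alpha_L)\to0$ is a universal central extension.
   Context: Fix a field $\mathbb K$ and $n\ge2$. A (multiplicative) Hom-Leibniz $n$-algebra is a $\mathbb K$-vector space $L$ with an $n$-linear bracket and a linear map $\alpha_L$ preserving the bracket, satisfying $[[x_1,\dots,x_n],\alpha_L(y_1),\dots,\alpha_L(y_{n-1})]=\sum_{i=1}^n[\alpha_L(x_1),\dots,[x_i,y_1,\dots,y_{n-1}],\dots,\alpha_L(x_n)]$. Homomorphisms preserve brackets and commute with twisting maps. Center $Z(K)$: elements $x$ with every bracket having $x$ in some position equal to $0$. An extension of $L$ is a surjective homomorphism $\pi:K\to L$ with kernel $M$; central if $M\subseteq Z(K)$; universal central if central and for every central extension $\pi':K'\to L$ there is a unique homomorphism $h:K\to K'$ with $\pi'\circ h=\pi$. Define $\delta_1:K^{\otimes n}\to K$, $\delta_1(x_1\otimes\dots\otimes x_n)=[x_1,\dots,x_n]$, and $\delta_2:K^{\otimes(2n-1)}\to K^{\otimes n}$, $\delta_2(x_1\otimes\dots\otimes x_n\otimes y_1\otimes\dots\otimes y_{n-1})=[x_1,\dots,x_n]\otimes\alpha_K(y_1)\otimes\dots\otimes\alpha_K(y_{n-1})-\sum_{i=1}^n\alpha_K(x_1)\otimes\dots\otimes[x_i,y_1,\dots,y_{n-1}]\otimes\dots\otimes\alpha_K(x_n)$.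 Then ${}_nHL_0^\alpha(K)=K/[K,\dots,K]$ and ${}_nHL_1^\alpha(K)=\ker\delta_1/\operatorname{im}\delta_2$. *)

theory Defs
  imports Complex_Main "HOL-Library.Function_Algebras"
begin

text \<open>A vector space is a whole type 'b with
 scalar multiplication sc (in the sense of the Main locale vector_space). The n-ary
 bracket is a function on lists; only its values on lists of length n matter.\<close>

definition nlinear :: "('k::field \<Rightarrow> 'b::ab_group_add \<Rightarrow> 'b) \<Rightarrow> nat \<Rightarrow> ('b list \<Rightarrow> 'b) \<Rightarrow> bool" where
  "nlinear sc n br \<longleftrightarrow>
     (\<forall>xs i a b. length xs = n \<longrightarrow> i < n \<longrightarrow>
        br (xs[i := a + b]) = br (xs[i := a]) + br (xs[i := b])) \<and>
     (\<forall>xs i c a. length xs = n \<longrightarrow> i < n \<longrightarrow>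
        br (xs[i := sc c a]) = sc c (br (xs[i := a])))"

definition hom_leibniz :: "('k::field \<Rightarrow> 'b::ab_group_add \<Rightarrow> 'b) \<Rightarrow> nat \<Rightarrow> ('b list \<Rightarrow> 'b) \<Rightarrow> ('b \<Rightarrow> 'b) \<Rightarrow> bool" where
  "hom_leibniz sc n br \<alpha> \<longleftrightarrow>
     vector_space sc \<and> nlinear sc n br \<and> Vector_Spaces.linear sc sc \<alpha> \<and>
     (\<forall>xs. length xs = n \<longrightarrow> \<alpha> (br xs) = br (map \<alpha> xs)) \<and>
     (\<forall>xs ys. length xs = n \<longrightarrow> length ys = n - 1 \<longrightarrow>
        br (br xs # map \<alpha> ys) =
        (\<Sum>i<n. br ((map \<alpha> xs)[i := br (xs ! i # ys)])))"

definition hl_hom :: "('k::field \<Rightarrow> 'b::ab_group_add \<Rightarrow> 'b) \<Rightarrow> ('b list \<Rightarrow> 'b) \<Rightarrow> ('b \<Rightarrow> 'b) \<Rightarrow>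
     ('k \<Rightarrow> 'c::ab_group_add \<Rightarrow> 'c) \<Rightarrow> ('c list \<Rightarrow> 'c) \<Rightarrow> ('c \<Rightarrow> 'c) \<Rightarrow> nat \<Rightarrow> ('b \<Rightarrow> 'c) \<Rightarrow> bool" where
  "hl_hom sK brK \<alpha>K sL brL \<alpha>L n f \<longleftrightarrow>
     Vector_Spaces.linear sK sL f \<and>
     (\<forall>xs. length xs = n \<longrightarrow> f (brK xs) = brL (map f xs)) \<and>
     (\<forall>x. f (\<alpha>K x) = \<alpha>L (f x))"

definition hl_center :: "nat \<Rightarrow> ('b::zero list \<Rightarrow> 'b) \<Rightarrow> 'b set" where
  "hl_center n br = {x. \<forall>xs i. length xs = n \<longrightarrow> i < n \<longrightarrow> br (xs[i := x]) = 0}"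

text \<open>Central extension pi : K -> L (with kernel M = ker pi).\<close>
definition central_ext where
  "central_ext sK brK \<alpha>K sL brL \<alpha>L n \<pi> \<longleftrightarrow>
     hom_leibniz sK n brK \<alpha>K \<and> hom_leibniz sL n brL \<alpha>L \<and>
     hl_hom sK brK \<alpha>K sL brL \<alpha>L n \<pi> \<and> surj \<pi> \<and>
     {x. \<pi> x = 0} \<subseteq> hl_center n brK"

text \<open>The type 'd is a parameter; universality is the conjunction over all types.\<close>
definition univ_central_ext_wrt ::
  "('k::field \<Rightarrow> 'b::ab_group_add \<Rightarrow> 'b) \<Rightarrow> ('b list \<Rightarrow> 'b) \<Rightarrow> ('b \<Rightarrow> 'b) \<Rightarrow>
   ('k \<Rightarrow> 'c::ab_group_add \<Rightarrow> 'c) \<Rightarrow> ('c list \<Rightarrow> 'c) \<Rightarrow> ('c \<Rightarrow> 'c) \<Rightarrow> nat \<Rightarrow> ('b \<Rightarrow> 'c) \<Rightarrow>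
   'd::ab_group_add itself \<Rightarrow> bool" where
  "univ_central_ext_wrt sK brK \<alpha>K sL brL \<alpha>L n \<pi> (_ :: 'd itself) \<longleftrightarrow>
     central_ext sK brK \<alpha>K sL brL \<alpha>L n \<pi> \<and>
     (\<forall>(sD :: 'k \<Rightarrow> 'd \<Rightarrow> 'd) brD \<alpha>D \<pi>'.
        central_ext sD brD \<alpha>D sL brL \<alpha>L n \<pi>' \<longrightarrow>
        (\<exists>!h. hl_hom sK brK \<alpha>K sD brD \<alpha>D n h \<and> \<pi>' \<circ> h = \<pi>))"

text \<open>The tensor power K^{(x)m} is realised concretely as the free vector space
 on lists of length m (finitely supported functions 'b list => 'k) modulo the subspace
 spanned by the multilinearity relations.\<close>

definition free_vs :: "nat \<Rightarrow> ('b list \<Rightarrow> 'k::field) set" where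
  "free_vs m = {f. finite {xs. f xs \<noteq> 0} \<and> (\<forall>xs. f xs \<noteq> 0 \<longrightarrow> length xs = m)}"

definition gen :: "'b list \<Rightarrow> ('b list \<Rightarrow> 'k::field)" where
  "gen xs = (\<lambda>ys. if ys = xs then 1 else 0)"

definition fscale :: "'k::field \<Rightarrow> ('b list \<Rightarrow> 'k) \<Rightarrow> ('b list \<Rightarrow> 'k)" where
  "fscale c f = (\<lambda>ys. c * f ys)"

definition tensor_rel :: "('k::field \<Rightarrow> 'b::ab_group_add \<Rightarrow> 'b) \<Rightarrow> nat \<Rightarrow> ('b list \<Rightarrow> 'k) set" where
  "tensor_rel sc m = module.span fscale
     ({gen (xs[i := a + b]) - gen (xs[i := a]) - gen (xs[i := b]) | xs i a b.
         length xs = m \<and> i < m} \<union>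
      {gen (xs[i := sc c a]) - fscale c (gen (xs[i := a])) | xs i c a.
         length xs = m \<and> i < m})"

definition delta1 :: "('k::field \<Rightarrow> 'b::ab_group_add \<Rightarrow> 'b) \<Rightarrow> ('b list \<Rightarrow> 'b) \<Rightarrow> ('b list \<Rightarrow> 'k) \<Rightarrow> 'b" where
  "delta1 sc br t = (\<Sum>xs\<in>{xs. t xs \<noteq> 0}. sc (t xs) (br xs))"

definition delta2_gen :: "nat \<Rightarrow> ('b list \<Rightarrow> 'b) \<Rightarrow> ('b \<Rightarrow> 'b) \<Rightarrow> 'b list \<Rightarrow> ('b list \<Rightarrow> 'k::field)" where
  "delta2_gen n br \<alpha> zs =
     (let xs = take n zs; ys = drop n zs in
      gen (br xs # map \<alpha> ys) - (\<Sum>i<n. gen ((map \<alpha> xs)[i := br (xs ! i # ys)])))"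

definition delta2 :: "nat \<Rightarrow> ('b list \<Rightarrow> 'b) \<Rightarrow> ('b \<Rightarrow> 'b) \<Rightarrow> ('b list \<Rightarrow> 'k::field) \<Rightarrow> ('b list \<Rightarrow> 'k)" where
  "delta2 n br \<alpha> s = (\<Sum>zs\<in>{zs. s zs \<noteq> 0}. fscale (s zs) (delta2_gen n br \<alpha> zs))"

text \<open>nHL_0(K) = K/[K,...,K] = 0\<close>
definition HL0_zero :: "('k::field \<Rightarrow> 'b::ab_group_add \<Rightarrow> 'b) \<Rightarrow> nat \<Rightarrow> ('b list \<Rightarrow> 'b) \<Rightarrow> bool" where
  "HL0_zero sc n br \<longleftrightarrow> module.span sc {br xs | xs. length xs = n} = UNIV"

text \<open>nHL_1(K) = ker delta_1 / im delta_2 = 0, on K^{(x)n} = free_vs n / tensor_rel n.\<close>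
definition HL1_zero :: "('k::field \<Rightarrow> 'b::ab_group_add \<Rightarrow> 'b) \<Rightarrow> nat \<Rightarrow> ('b list \<Rightarrow> 'b) \<Rightarrow> ('b \<Rightarrow> 'b) \<Rightarrow> bool" where
  "HL1_zero sc n br \<alpha> \<longleftrightarrow>
     (\<forall>t \<in> free_vs n. delta1 sc br t = 0 \<longrightarrow>
        (\<exists>s \<in> free_vs (2 * n - 1). t - delta2 n br \<alpha> s \<in> tensor_rel sc n))"

end

theory Submission
  imports Defs
begin

definition Phi :: "('k::field \<Rightarrow> 'd::ab_group_add \<Rightarrow> 'd) \<Rightarrow> ('a list \<Rightarrow> 'd) \<Rightarrow> ('a list \<Rightarrow> 'k) \<Rightarrow> 'd" where
  "Phi sc g f = (\<Sum>xs\<in>{xs. f xs \<noteq> 0}. sc (f xs) (g xs))"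

abbreviation fin :: "('a list \<Rightarrow> 'k::field) \<Rightarrow> bool" where "fin f \<equiv> finite {xs. f xs \<noteq> 0}"

lemma delta1_Phi: "delta1 sc br = Phi sc br"
  by (rule ext) (simp add: delta1_def Phi_def)

lemma fin_add: "fin f \<Longrightarrow> fin h \<Longrightarrow> fin (f + h)"
  by (rule finite_subset[of _ "{xs. f xs \<noteq> 0} \<union> {xs. h xs \<noteq> 0}"]) auto

lemma fin_diff: "fin f \<Longrightarrow> fin h \<Longrightarrow> fin (f - h)"
  by (rule finite_subset[of _ "{xs. f xs \<noteq> 0} \<union> {xs. h xs \<noteq> 0}"]) auto

lemma fin_fscale: "fin f \<Longrightarrow> fin (fscale c f)"
  by (rule finite_subset[of _ "{xs. f xs \<noteq> 0}"]) (auto simp: fscale_def)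

lemma fin_gen: "fin (gen xs :: _ \<Rightarrow> 'k::field)"
  by (rule finite_subset[of _ "{xs}"]) (auto simp: gen_def)

lemma fin_zero: "fin 0"
  by simp

lemma Phi_superset:
  assumes "vector_space sc" "finite A" "{xs. f xs \<noteq> 0} \<subseteq> A"
  shows "Phi sc g f = (\<Sum>xs\<in>A. sc (f xs) (g xs))"
proof -
  interpret vector_space sc by fact
  show ?thesis unfolding Phi_def
    by (rule sum.mono_neutral_left) (use assms in auto)
qed

lemma Phi_add:
  assumes vs: "vector_space sc" and "fin f" "fin h"
  shows "Phi sc g (f + h) = Phi sc g f + Phi sc g h"
proof -
  interpret vector_space sc by fact
  let ?A = "{xs. f xs \<noteq> 0} \<union> {xs. h xs \<noteq> 0}"
  have fA: "finite ?A" using assms by simp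
  have "Phi sc g (f+h) = (\<Sum>xs\<in>?A. sc ((f+h) xs) (g xs))" by (rule Phi_superset[OF vs fA]) auto
  also have "\<dots> = (\<Sum>xs\<in>?A. sc (f xs) (g xs)) + (\<Sum>xs\<in>?A. sc (h xs) (g xs))"
    by (simp add: scale_left_distrib sum.distrib)
  also have "\<dots> = Phi sc g f + Phi sc g h"
    using Phi_superset[OF vs fA, of f g] Phi_superset[OF vs fA, of h g] by auto
  finally show ?thesis .
qed

lemma Phi_diff:
  assumes vs: "vector_space sc" and "fin f" "fin h"
  shows "Phi sc g (f - h) = Phi sc g f - Phi sc g h"
proof -
  interpret vector_space sc by fact
  let ?A = "{xs. f xs \<noteq> 0} \<union> {xs. h xs \<noteq> 0}"
  have fA: "finite ?A" using assms by simp
  have "Phi sc g (f-h) = (\<Sum>xs\<in>?A. sc ((f-h) xs) (g xs))" by (rule Phi_superset[OF vs fA]) auto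
  also have "\<dots> = (\<Sum>xs\<in>?A. sc (f xs) (g xs)) - (\<Sum>xs\<in>?A. sc (h xs) (g xs))"
    by (simp add: scale_left_diff_distrib sum_subtractf)
  also have "\<dots> = Phi sc g f - Phi sc g h"
    using Phi_superset[OF vs fA, of f g] Phi_superset[OF vs fA, of h g] by auto
  finally show ?thesis .
qed

lemma Phi_scale:
  assumes vs: "vector_space sc" and "fin f"
  shows "Phi sc g (fscale c f) = sc c (Phi sc g f)"
proof -
  interpret vector_space sc by fact
  let ?A = "{xs. f xs \<noteq> 0}"
  have fA: "finite ?A" using assms by simp
  have "Phi sc g (fscale c f) = (\<Sum>xs\<in>?A. sc (fscale c f xs) (g xs))"
    by (rule Phi_superset[OF vs fA]) (auto simp: fscale_def)
  also have "\<dots> = sc c (\<Sum>xs\<in>?A. sc (f xs) (g xs))"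
    by (simp add: scale_sum_right fscale_def)
  also have "\<dots> = sc c (Phi sc g f)"
    by (simp add: Phi_def)
  finally show ?thesis .
qed

lemma Phi_zero: "Phi sc g (0 :: 'a list \<Rightarrow> 'k::field) = (0::'d::ab_group_add)"
proof -
  have "{xs. (0 :: 'a list \<Rightarrow> 'k) xs \<noteq> 0} = {}" by simp
  then show ?thesis unfolding Phi_def by (simp only: sum.empty)
qed

lemma Phi_gen':
  assumes "vector_space sc" shows "Phi sc g (gen xs :: _ \<Rightarrow> 'k::field) = g xs"
proof -
  interpret vector_space sc by fact
  have "{ys. (gen xs :: _ \<Rightarrow> 'k) ys \<noteq> 0} = {xs}" by (auto simp: gen_def)
  then show ?thesis by (auto simp: Phi_def gen_def)
qed

lemma Phi_sum:
  fixes F :: "'i \<Rightarrow> 'a list \<Rightarrow> 'k::field"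
  assumes vs: "vector_space sc" and "finite I" "\<forall>i\<in>I. fin (F i)"
  shows "Phi sc g (\<Sum>i\<in>I. F i) = (\<Sum>i\<in>I. Phi sc g (F i)) \<and> fin (\<Sum>i\<in>I. F i)"
  using assms(2,3)
proof (induction I rule: finite_induct)
  case empty
  have "Phi sc g (0 :: 'a list \<Rightarrow> 'k) = 0" by (rule Phi_zero)
  then show ?case by (simp add: zero_fun_def)
next
  case (insert x F')
  have e: "sum F (insert x F') = F x + sum F F'" by (rule sum.insert[OF insert(1,2)])
  have f1: "fin (F x)" "fin (sum F F')" using insert by auto
  show ?case unfolding e using Phi_add[OF vs f1, of g] fin_add[OF f1] insert by (simp add: plus_fun_def)
qed

lemma Phi_cong: "(\<And>xs. f xs \<noteq> 0 \<Longrightarrow> g1 xs = g2 xs) \<Longrightarrow> Phi sc g1 f = Phi sc g2 f"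
  unfolding Phi_def by (rule sum.cong) auto

lemma Phi_linear:
  assumes "Vector_Spaces.linear s1 s2 p"
  shows "p (Phi s1 g f) = Phi s2 (p \<circ> g) f"
proof -
  interpret L: Vector_Spaces.linear s1 s2 p by fact
  show ?thesis unfolding Phi_def by (simp add: L.sum L.scale)
qed

lemma module_fscale: "module (fscale :: 'k::field \<Rightarrow> ('b list \<Rightarrow> 'k) \<Rightarrow> _)"
  by unfold_locales (auto simp: fscale_def fun_eq_iff algebra_simps)

lemma free_vs_iff: "f \<in> free_vs m \<longleftrightarrow> fin f \<and> (\<forall>xs. f xs \<noteq> 0 \<longrightarrow> length xs = m)"
  by (simp add: free_vs_def)

lemma free_vs_add: "f \<in> free_vs m \<Longrightarrow> h \<in> free_vs m \<Longrightarrow> f + h \<in> free_vs m"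
  using fin_add[of f h] unfolding free_vs_iff by (metis add.right_neutral plus_fun_apply)

lemma free_vs_diff: "f \<in> free_vs m \<Longrightarrow> h \<in> free_vs m \<Longrightarrow> f - h \<in> free_vs m"
  using fin_diff[of f h] unfolding free_vs_iff by (metis diff_self minus_apply)

lemma free_vs_fscale: "f \<in> free_vs m \<Longrightarrow> fscale c f \<in> free_vs m"
  by (auto simp: free_vs_iff fin_fscale fscale_def)

lemma free_vs_gen: "length xs = m \<Longrightarrow> (gen xs :: _ \<Rightarrow> 'k::field) \<in> free_vs m"
  by (auto simp: free_vs_iff fin_gen gen_def)

lemma free_vs_zero: "0 \<in> free_vs m"
  by (auto simp: free_vs_iff)


lemma cent_eq:
  assumes nl: "nlinear sD n brD" and lp: "Vector_Spaces.linear sD sL p"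
    and ker: "{x. p x = 0} \<subseteq> hl_center n brD"
    and lu: "length us = n" and lv: "length vs = n"
    and eq: "\<forall>i<n. p (us!i) = p (vs!i)"
  shows "brD us = brD vs"
proof -
  interpret L: Vector_Spaces.linear sD sL p by fact
  define mix where "mix k = map (\<lambda>i. if i < k then vs!i else us!i) [0..<n]" for k
  have lm: "length (mix k) = n" for k by (simp add: mix_def)
  have step: "brD (mix k) = brD (mix (Suc k))" if "k < n" for k
  proof -
    have c: "us!k - vs!k \<in> hl_center n brD"
      using ker eq that L.diff by auto
    have m1: "mix k = (mix (Suc k))[k := vs!k + (us!k - vs!k)]"
      by (rule nth_equalityI) (auto simp: mix_def nth_list_update that)
    have m2: "(mix (Suc k))[k := vs!k] = mix (Suc k)"
      by (rule nth_equalityI) (auto simp: mix_def nth_list_update that)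
    have "brD (mix k) = brD ((mix (Suc k))[k := vs!k]) + brD ((mix (Suc k))[k := us!k - vs!k])"
      unfolding m1 using nl lm that unfolding nlinear_def by blast
    also have "brD ((mix (Suc k))[k := us!k - vs!k]) = 0"
      using c lm that unfolding hl_center_def by blast
    finally show ?thesis using m2 by simp
  qed
  have "k \<le> n \<Longrightarrow> brD us = brD (mix k)" for k
  proof (induction k)
    case 0
    have "mix 0 = us" by (rule nth_equalityI) (auto simp: mix_def lu)
    then show ?case by simp
  next
    case (Suc k)
    then show ?case using step[of k] by simp
  qed
  moreover have "mix n = vs" by (rule nth_equalityI) (auto simp: mix_def lv)
  ultimately show ?thesis by auto
qed

lemma Phi_tensor_rel:
  fixes g :: "'b::ab_group_add list \<Rightarrow> 'd::ab_group_add" and sK :: "'k::field \<Rightarrow> 'b \<Rightarrow> 'b"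
  assumes vs: "vector_space sD"
    and g_add: "\<And>xs i a b. length xs = n \<Longrightarrow> i < n \<Longrightarrow> g (xs[i := a + b]) = g (xs[i := a]) + g (xs[i := b])"
    and g_sc: "\<And>xs i c a. length xs = n \<Longrightarrow> i < n \<Longrightarrow> g (xs[i := sK c a]) = sD c (g (xs[i := a]))"
    and f: "f \<in> tensor_rel sK n"
  shows "fin f \<and> Phi sD g f = 0"
proof -
  interpret M: module "fscale :: 'k \<Rightarrow> ('b list \<Rightarrow> 'k) \<Rightarrow> _" by (rule module_fscale)
  interpret V: vector_space sD by fact
  have sub: "M.subspace {f. fin f \<and> Phi sD g f = 0}"
  proof (rule M.subspaceI)
    show "0 \<in> {f. fin f \<and> Phi sD g f = 0}" using Phi_zero[of sD g] by simp
  next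
    fix x y assume "x \<in> {f. fin f \<and> Phi sD g f = 0}" "y \<in> {f. fin f \<and> Phi sD g f = 0}"
    then show "x + y \<in> {f. fin f \<and> Phi sD g f = 0}" using Phi_add[OF vs, of x y g] fin_add[of x y] by simp
  next
    fix c x assume "x \<in> {f. fin f \<and> Phi sD g f = 0}"
    then show "fscale c x \<in> {f. fin f \<and> Phi sD g f = 0}" using Phi_scale[OF vs, of x g c] fin_fscale[of x c] by simp
  qed
  show ?thesis
    using f unfolding tensor_rel_def
  proof (induction rule: M.span_induct)
    case base
    show ?case using sub by simp
  next
    case (step x)
    then show ?case
    proof
      assume "x \<in> {gen (xs[i := a + b]) - gen (xs[i := a]) - gen (xs[i := b]) | xs i a b. length xs = n \<and> i < n}"
      then obtain xs i a b where x: "x = gen (xs[i := a + b]) - gen (xs[i := a]) - gen (xs[i := b])"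
        and l: "length xs = n" "i < n" by blast
      let ?A = "gen (xs[i := a + b]) :: 'b list \<Rightarrow> 'k" and ?B = "gen (xs[i := a]) :: 'b list \<Rightarrow> 'k"
        and ?C = "gen (xs[i := b]) :: 'b list \<Rightarrow> 'k"
      have fA: "fin ?A" "fin ?B" "fin ?C" by (rule fin_gen)+
      have "fin (?A - ?B - ?C)" using fin_diff[OF fin_diff[OF fA(1,2)] fA(3)] .
      moreover have "Phi sD g (?A - ?B - ?C) = 0"
        unfolding Phi_diff[OF vs fin_diff[OF fA(1,2)] fA(3)] Phi_diff[OF vs fA(1,2)] Phi_gen'[OF vs] g_add[OF l]
        by simp
      ultimately show ?thesis unfolding x by blast
    next
      assume "x \<in> {gen (xs[i := sK c a]) - fscale c (gen (xs[i := a])) | xs i c a. length xs = n \<and> i < n}"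
      then obtain xs i c a where x: "x = gen (xs[i := sK c a]) - fscale c (gen (xs[i := a]))"
        and l: "length xs = n" "i < n" by blast
      let ?A = "gen (xs[i := sK c a]) :: 'b list \<Rightarrow> 'k" and ?B = "gen (xs[i := a]) :: 'b list \<Rightarrow> 'k"
      have fA: "fin ?A" "fin ?B" by (rule fin_gen)+
      have fB: "fin (fscale c ?B)" by (rule fin_fscale[OF fA(2)])
      have "fin (?A - fscale c ?B)" using fin_diff[OF fA(1) fB] .
      moreover have "Phi sD g (?A - fscale c ?B) = 0"
        unfolding Phi_diff[OF vs fA(1) fB] Phi_scale[OF vs fA(2)] Phi_gen'[OF vs] g_sc[OF l]
        by simp
      ultimately show ?thesis unfolding x by blast
    qed
  qed
qed


lemma Phi_delta2_gen:
  fixes g :: "'b::ab_group_add list \<Rightarrow> 'd::ab_group_add" and sD :: "'k::field \<Rightarrow> 'd \<Rightarrow> 'd"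
  assumes vs: "vector_space sD"
  shows "fin (delta2_gen n br \<alpha> zs :: 'b list \<Rightarrow> 'k) \<and>
    Phi sD g (delta2_gen n br \<alpha> zs :: 'b list \<Rightarrow> 'k) =
      g (br (take n zs) # map \<alpha> (drop n zs)) - (\<Sum>i<n. g ((map \<alpha> (take n zs))[i := br ((take n zs) ! i # drop n zs)]))"
proof -
  let ?A = "gen (br (take n zs) # map \<alpha> (drop n zs)) :: 'b list \<Rightarrow> 'k"
  let ?F = "\<lambda>i. gen ((map \<alpha> (take n zs))[i := br ((take n zs) ! i # drop n zs)]) :: 'b list \<Rightarrow> 'k"
  have e: "delta2_gen n br \<alpha> zs = ?A - (\<Sum>i<n. ?F i)"
    by (simp add: delta2_gen_def Let_def)
  have fA: "fin ?A" by (rule fin_gen)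
  have S: "Phi sD g (\<Sum>i<n. ?F i) = (\<Sum>i<n. Phi sD g (?F i)) \<and> fin (\<Sum>i<n. ?F i)"
    by (rule Phi_sum[OF vs]) (auto simp: fin_gen)
  show ?thesis unfolding e
    using fin_diff[OF fA conjunct2[OF S]] Phi_diff[OF vs fA conjunct2[OF S], of g] conjunct1[OF S]
    by (simp add: Phi_gen'[OF vs])
qed

lemma Phi_delta2:
  fixes g :: "'b::ab_group_add list \<Rightarrow> 'd::ab_group_add" and sD :: "'k::field \<Rightarrow> 'd \<Rightarrow> 'd"
  assumes vs: "vector_space sD"
    and gen0: "\<And>zs. length zs = m \<Longrightarrow> g (br (take n zs) # map \<alpha> (drop n zs)) =
        (\<Sum>i<n. g ((map \<alpha> (take n zs))[i := br ((take n zs) ! i # drop n zs)]))"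
    and s: "s \<in> free_vs m"
  shows "fin (delta2 n br \<alpha> s) \<and> Phi sD g (delta2 n br \<alpha> s) = 0"
proof -
  interpret V: vector_space sD by fact
  let ?F = "\<lambda>zs. fscale (s zs) (delta2_gen n br \<alpha> zs) :: 'b list \<Rightarrow> 'k"
  have fs: "finite {zs. s zs \<noteq> 0}" using s by (simp add: free_vs_iff)
  have e: "delta2 n br \<alpha> s = (\<Sum>zs\<in>{zs. s zs \<noteq> 0}. ?F zs)" by (simp add: delta2_def)
  have fF: "\<forall>zs\<in>{zs. s zs \<noteq> 0}. fin (?F zs)"
    using Phi_delta2_gen[OF vs] fin_fscale by blast
  have S: "Phi sD g (\<Sum>zs\<in>{zs. s zs \<noteq> 0}. ?F zs) = (\<Sum>zs\<in>{zs. s zs \<noteq> 0}. Phi sD g (?F zs))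
     \<and> fin (\<Sum>zs\<in>{zs. s zs \<noteq> 0}. ?F zs)"
    by (rule Phi_sum[OF vs fs fF])
  have z: "Phi sD g (?F zs) = 0" if "zs \<in> {zs. s zs \<noteq> 0}" for zs
  proof -
    have l: "length zs = m" using that s by (simp add: free_vs_iff)
    have "fin (delta2_gen n br \<alpha> zs :: 'b list \<Rightarrow> 'k)" using Phi_delta2_gen[OF vs] by blast
    then have "Phi sD g (?F zs) = sD (s zs) (Phi sD g (delta2_gen n br \<alpha> zs :: 'b list \<Rightarrow> 'k))"
      by (rule Phi_scale[OF vs])
    also have "\<dots> = 0" using Phi_delta2_gen[OF vs, of n br \<alpha> zs g] gen0[OF l] by simp
    finally show ?thesis .
  qed
  show ?thesis unfolding e using S z by simp
qed


lemma uniq: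
  assumes hK: "hom_leibniz sK n brK \<alpha>K" and H0: "HL0_zero sK n brK"
    and cD: "central_ext sD brD \<alpha>D sL brL \<alpha>L n p"
    and h1: "hl_hom sK brK \<alpha>K sD brD \<alpha>D n h1" and h2: "hl_hom sK brK \<alpha>K sD brD \<alpha>D n h2"
    and e: "p \<circ> h1 = p \<circ> h2"
  shows "h1 = h2"
proof -
  have vsK: "vector_space sK" using hK by (simp add: hom_leibniz_def)
  have hD: "hom_leibniz sD n brD \<alpha>D" and lp: "Vector_Spaces.linear sD sL p"
    and ker: "{x. p x = 0} \<subseteq> hl_center n brD"
    using cD unfolding central_ext_def hl_hom_def by auto
  have vsD: "vector_space sD" and nlD: "nlinear sD n brD" using hD by (auto simp: hom_leibniz_def)
  have l1: "Vector_Spaces.linear sK sD h1" and l2: "Vector_Spaces.linear sK sD h2"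
    using h1 h2 by (auto simp: hl_hom_def)
  have br: "h1 x = h2 x" if xin: "x \<in> {brK xs |xs. length xs = n}" for x
  proof -
    obtain xs where x: "x = brK xs" "length xs = n" using xin by blast
    have "h1 (brK xs) = brD (map h1 xs)" using h1 x unfolding hl_hom_def by blast
    also have "\<dots> = brD (map h2 xs)"
      by (rule cent_eq[OF nlD lp ker]) (use x e in \<open>auto simp: fun_eq_iff\<close>)
    also have "\<dots> = h2 (brK xs)" using h2 x unfolding hl_hom_def by metis
    finally show ?thesis using x by simp
  qed
  interpret P: vector_space_pair sK sD by (simp add: vector_space_pair_def vsK vsD)
  show ?thesis
  proof
    fix x
    have "x \<in> P.vs1.span {brK xs |xs. length xs = n}" using H0 by (simp add: HL0_zero_def)
    then show "h1 x = h2 x"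
      using vector_space_pair.linear_eq_on_span[OF P.vector_space_pair_axioms l1 l2, of "{brK xs |xs. length xs = n}" x] br
      by blast
  qed
qed


lemma exist:
  fixes sK :: "'k::field \<Rightarrow> 'b::ab_group_add \<Rightarrow> 'b" and sD :: "'k \<Rightarrow> 'd::ab_group_add \<Rightarrow> 'd"
    and sL :: "'k \<Rightarrow> 'c::ab_group_add \<Rightarrow> 'c"
  assumes n: "n \<ge> 1" and hK: "hom_leibniz sK n brK \<alpha>K" and H0: "HL0_zero sK n brK"
    and H1: "HL1_zero sK n brK \<alpha>K"
    and cK: "central_ext sK brK \<alpha>K sL brL \<alpha>L n \<pi>"
    and cD: "central_ext sD brD \<alpha>D sL brL \<alpha>L n p"
  shows "\<exists>h. hl_hom sK brK \<alpha>K sD brD \<alpha>D n h \<and> p \<circ> h = \<pi>"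
proof -
  have vsK: "vector_space sK" and laK: "Vector_Spaces.linear sK sK \<alpha>K"
    and aK: "\<And>xs. length xs = n \<Longrightarrow> \<alpha>K (brK xs) = brK (map \<alpha>K xs)"
    using hK unfolding hom_leibniz_def by auto
  have hL: "hom_leibniz sL n brL \<alpha>L" using cK by (simp add: central_ext_def)
  have vsL: "vector_space sL" using hL by (simp add: hom_leibniz_def)
  have hD: "hom_leibniz sD n brD \<alpha>D" using cD by (simp add: central_ext_def)
  have vsD: "vector_space sD" and nlD: "nlinear sD n brD" and laD: "Vector_Spaces.linear sD sD \<alpha>D"
    and aD: "\<And>xs. length xs = n \<Longrightarrow> \<alpha>D (brD xs) = brD (map \<alpha>D xs)"
    and LD: "\<And>xs ys. length xs = n \<Longrightarrow> length ys = n - 1 \<Longrightarrow>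
        brD (brD xs # map \<alpha>D ys) = (\<Sum>i<n. brD ((map \<alpha>D xs)[i := brD (xs ! i # ys)]))"
    using hD unfolding hom_leibniz_def by auto
  have lpi: "Vector_Spaces.linear sK sL \<pi>"
    and pibr: "\<And>xs. length xs = n \<Longrightarrow> \<pi> (brK xs) = brL (map \<pi> xs)"
    and pial: "\<And>x. \<pi> (\<alpha>K x) = \<alpha>L (\<pi> x)"
    using cK unfolding central_ext_def hl_hom_def by auto
  have lp: "Vector_Spaces.linear sD sL p"
    and pbr: "\<And>xs. length xs = n \<Longrightarrow> p (brD xs) = brL (map p xs)"
    and pal: "\<And>x. p (\<alpha>D x) = \<alpha>L (p x)"
    and sp: "surj p" and ker: "{x. p x = 0} \<subseteq> hl_center n brD"
    using cD unfolding central_ext_def hl_hom_def by auto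
  obtain g0 where lg0: "Vector_Spaces.linear sL sD g0" and pg0: "p \<circ> g0 = id"
    using vector_space_pair.linear_surjective_right_inverse[of sD sL p] vsD vsL lp sp
    by (auto simp: vector_space_pair_def)
  define t where "t = g0 \<circ> \<pi>"
  have lt: "Vector_Spaces.linear sK sD t" unfolding t_def
    by (rule Vector_Spaces.linear_compose[OF lpi lg0])
  have pt: "p (t y) = \<pi> y" for y using pg0 by (simp add: t_def fun_eq_iff)
  have t_add: "t (a + b) = t a + t b" and t_sc: "t (sK c a) = sD c (t a)" for a b c
    using lt by (auto simp: Vector_Spaces.linear_iff)
  define g where "g xs = brD (map t xs)" for xs
  have g_add: "g (xs[i := a + b]) = g (xs[i := a]) + g (xs[i := b])"
    if "length xs = n" "i < n" for xs i a b
    unfolding g_def map_update t_add using nlD that unfolding nlinear_def by simp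
  have g_sc: "g (xs[i := sK c a]) = sD c (g (xs[i := a]))"
    if "length xs = n" "i < n" for xs i c a
    unfolding g_def map_update t_sc using nlD that unfolding nlinear_def by simp
  have ceq: "brD us = brD vs" if "length us = n" "length vs = n" "\<forall>i<n. p (us!i) = p (vs!i)" for us vs
    using cent_eq[OF nlD lp ker that] .
  have gen0: "g (brK (take n zs) # map \<alpha>K (drop n zs)) =
        (\<Sum>i<n. g ((map \<alpha>K (take n zs))[i := brK ((take n zs) ! i # drop n zs)]))"
    if lz: "length zs = 2 * n - 1" for zs
  proof -
    define xs ys where "xs = take n zs" and "ys = drop n zs"
    have lx: "length xs = n" and ly: "length ys = n - 1" using lz n by (auto simp: xs_def ys_def)
    have lxi: "length (xs ! i # ys) = n" for i using ly n by simp
    have "g (brK xs # map \<alpha>K ys) = brD (brD (map t xs) # map \<alpha>D (map t ys))"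
      unfolding g_def
    proof (rule ceq)
      show "\<forall>i<n. p (map t (brK xs # map \<alpha>K ys) ! i) = p ((brD (map t xs) # map \<alpha>D (map t ys)) ! i)"
      proof (intro allI impI)
        fix i assume i: "i < n"
        show "p (map t (brK xs # map \<alpha>K ys) ! i) = p ((brD (map t xs) # map \<alpha>D (map t ys)) ! i)"
        proof (cases i)
          case 0
          then show ?thesis using lx by (simp add: pt pibr pbr o_def)
        next
          case (Suc j)
          then have "j < length ys" using i ly by simp
          then show ?thesis using Suc by (simp add: pt pial pal)
        qed
      qed
    qed (use lx ly n in auto)
    also have "\<dots> = (\<Sum>i<n. brD ((map \<alpha>D (map t xs))[i := brD ((map t xs) ! i # map t ys)]))"
      by (rule LD) (use lx ly in auto)
    also have "\<dots> = (\<Sum>i<n. g ((map \<alpha>K xs)[i := brK (xs ! i # ys)]))"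
    proof (rule sum.cong[OF refl])
      fix i assume "i \<in> {..<n}"
      then have i: "i < n" by simp
      show "brD ((map \<alpha>D (map t xs))[i := brD ((map t xs) ! i # map t ys)]) = g ((map \<alpha>K xs)[i := brK (xs ! i # ys)])"
        unfolding g_def
      proof (rule ceq)
        show "\<forall>j<n. p ((map \<alpha>D (map t xs))[i := brD (map t xs ! i # map t ys)] ! j) =
             p (map t ((map \<alpha>K xs)[i := brK (xs ! i # ys)]) ! j)"
        proof (intro allI impI)
          fix j assume j: "j < n"
          show "p ((map \<alpha>D (map t xs))[i := brD (map t xs ! i # map t ys)] ! j) =
             p (map t ((map \<alpha>K xs)[i := brK (xs ! i # ys)]) ! j)"
          proof (cases "j = i")
            case True
            have l2: "length (t (xs ! i) # map t ys) = n" using ly n by simp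
            show ?thesis using True i lx pbr[OF l2] pibr[OF lxi[of i]]
              by (simp add: nth_list_update pt o_def)
          next
            case False
            then show ?thesis using j lx by (simp add: nth_list_update pt pial pal)
          qed
        qed
      qed (use lx in auto)
    qed
    finally show ?thesis by (simp add: xs_def ys_def)
  qed
  have PD2: "fin (delta2 n brK \<alpha>K s :: 'b list \<Rightarrow> 'k) \<and> Phi sD g (delta2 n brK \<alpha>K s :: 'b list \<Rightarrow> 'k) = 0"
    if "s \<in> free_vs (2 * n - 1)" for s
    by (rule Phi_delta2[OF vsD gen0 that])
  have PT: "fin f \<and> Phi sD g f = 0" if "f \<in> tensor_rel sK n" for f
    by (rule Phi_tensor_rel[OF vsD g_add g_sc that])
  have wd: "Phi sD g \<tau> = 0" if \<tau>: "\<tau> \<in> free_vs n" "Phi sK brK \<tau> = 0" for \<tau>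
  proof -
    obtain s where s: "s \<in> free_vs (2 * n - 1)" and r: "\<tau> - delta2 n brK \<alpha>K s \<in> tensor_rel sK n"
      using H1 \<tau> unfolding HL1_zero_def delta1_Phi by blast
    have f\<tau>: "fin \<tau>" using \<tau> by (simp add: free_vs_iff)
    have d: "fin (delta2 n brK \<alpha>K s)" "Phi sD g (delta2 n brK \<alpha>K s) = 0" using PD2[OF s] by auto
    have "Phi sD g (\<tau> - delta2 n brK \<alpha>K s) = 0" using PT[OF r] by simp
    then show ?thesis using Phi_diff[OF vsD f\<tau> d(1), of g] d(2) by simp
  qed
  have ex: "\<exists>\<tau>\<in>free_vs n. Phi sK brK \<tau> = y" for y
  proof -
    interpret K: vector_space sK by fact
    have "y \<in> K.span {brK xs |xs. length xs = n}" using H0 by (simp add: HL0_zero_def)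
    then show ?thesis
    proof (induction rule: K.span_induct)
      case base
      show ?case
      proof (rule K.subspaceI)
        show "0 \<in> {y. \<exists>\<tau>\<in>free_vs n. Phi sK brK \<tau> = y}"
          using free_vs_zero Phi_zero by blast
      next
        fix x y assume "x \<in> {y. \<exists>\<tau>\<in>free_vs n. Phi sK brK \<tau> = y}" "y \<in> {y. \<exists>\<tau>\<in>free_vs n. Phi sK brK \<tau> = y}"
        then obtain \<tau>1 \<tau>2 where "\<tau>1 \<in> free_vs n" "\<tau>2 \<in> free_vs n" "Phi sK brK \<tau>1 = x" "Phi sK brK \<tau>2 = y" by blast
        then show "x + y \<in> {y. \<exists>\<tau>\<in>free_vs n. Phi sK brK \<tau> = y}"
          using Phi_add[OF vsK, of \<tau>1 \<tau>2 brK] free_vs_add[of \<tau>1 n \<tau>2] by (auto simp: free_vs_iff)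
      next
        fix c x assume "x \<in> {y. \<exists>\<tau>\<in>free_vs n. Phi sK brK \<tau> = y}"
        then obtain \<tau>1 where "\<tau>1 \<in> free_vs n" "Phi sK brK \<tau>1 = x" by blast
        then show "sK c x \<in> {y. \<exists>\<tau>\<in>free_vs n. Phi sK brK \<tau> = y}"
          using Phi_scale[OF vsK, of \<tau>1 brK c] free_vs_fscale[of \<tau>1 n c] by (auto simp: free_vs_iff)
      qed
    next
      case (step x)
      then obtain xs where "x = brK xs" "length xs = n" by blast
      then show ?case using free_vs_gen[of xs n] Phi_gen'[OF vsK, of brK xs] by auto
    qed
  qed
  define h where "h y = Phi sD g (SOME \<tau>. \<tau> \<in> free_vs n \<and> Phi sK brK \<tau> = y)" for y
  have key: "h (Phi sK brK \<tau>) = Phi sD g \<tau>" if \<tau>: "\<tau> \<in> free_vs n" for \<tau>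
  proof -
    let ?\<sigma> = "SOME \<sigma>. \<sigma> \<in> free_vs n \<and> Phi sK brK \<sigma> = Phi sK brK \<tau>"
    have \<sigma>: "?\<sigma> \<in> free_vs n \<and> Phi sK brK ?\<sigma> = Phi sK brK \<tau>" using someI_ex[of "\<lambda>\<sigma>. \<sigma> \<in> free_vs n \<and> Phi sK brK \<sigma> = Phi sK brK \<tau>"] \<tau> by blast
    have f1: "fin ?\<sigma>" and f2: "fin \<tau>" using \<sigma> \<tau> by (auto simp: free_vs_iff)
    have "Phi sK brK (?\<sigma> - \<tau>) = 0" using Phi_diff[OF vsK f1 f2, of brK] \<sigma> by simp
    then have "Phi sD g (?\<sigma> - \<tau>) = 0" using wd free_vs_diff[of ?\<sigma> n \<tau>] \<sigma> \<tau> by blast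
    then have "Phi sD g ?\<sigma> = Phi sD g \<tau>" using Phi_diff[OF vsD f1 f2, of g] by simp
    then show ?thesis by (simp add: h_def)
  qed
  have ph: "p (h y) = \<pi> y" for y
  proof -
    obtain \<tau> where \<tau>: "\<tau> \<in> free_vs n" "Phi sK brK \<tau> = y" using ex by blast
    have "p (h y) = p (Phi sD g \<tau>)" using key[OF \<tau>(1)] \<tau>(2) by simp
    also have "\<dots> = Phi sL (p \<circ> g) \<tau>" by (rule Phi_linear[OF lp])
    also have "\<dots> = Phi sL (\<pi> \<circ> brK) \<tau>"
    proof (rule Phi_cong)
      fix xs assume "\<tau> xs \<noteq> 0"
      then have l: "length xs = n" using \<tau> by (simp add: free_vs_iff)
      then show "(p \<circ> g) xs = (\<pi> \<circ> brK) xs" by (simp add: g_def pbr pibr o_def pt)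
    qed
    also have "\<dots> = \<pi> (Phi sK brK \<tau>)" by (rule Phi_linear[OF lpi, symmetric])
    finally show ?thesis using \<tau> by simp
  qed
  have lh: "Vector_Spaces.linear sK sD h"
    unfolding Vector_Spaces.linear_iff
  proof (intro conjI allI)
    fix x y
    obtain \<tau>1 where t1: "\<tau>1 \<in> free_vs n" "Phi sK brK \<tau>1 = x" using ex by blast
    obtain \<tau>2 where t2: "\<tau>2 \<in> free_vs n" "Phi sK brK \<tau>2 = y" using ex by blast
    have f: "fin \<tau>1" "fin \<tau>2" using t1 t2 by (auto simp: free_vs_iff)
    have "x + y = Phi sK brK (\<tau>1 + \<tau>2)" using Phi_add[OF vsK f, of brK] t1 t2 by simp
    then have "h (x + y) = Phi sD g (\<tau>1 + \<tau>2)" using key free_vs_add[OF t1(1) t2(1)] by simp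
    also have "\<dots> = h x + h y" using Phi_add[OF vsD f, of g] key[OF t1(1)] key[OF t2(1)] t1 t2 by simp
    finally show "h (x + y) = h x + h y" .
  next
    fix c x
    obtain \<tau>1 where t1: "\<tau>1 \<in> free_vs n" "Phi sK brK \<tau>1 = x" using ex by blast
    have f: "fin \<tau>1" using t1 by (auto simp: free_vs_iff)
    have "sK c x = Phi sK brK (fscale c \<tau>1)" using Phi_scale[OF vsK f, of brK c] t1 by simp
    then have "h (sK c x) = Phi sD g (fscale c \<tau>1)" using key free_vs_fscale[OF t1(1)] by simp
    also have "\<dots> = sD c (h x)" using Phi_scale[OF vsD f, of g c] key[OF t1(1)] t1 by simp
    finally show "h (sK c x) = sD c (h x)" .
  qed (use vsK vsD in auto)
  have hbr: "h (brK xs) = brD (map h xs)" if l: "length xs = n" for xs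
  proof -
    have "h (brK xs) = h (Phi sK brK (gen xs))" using Phi_gen'[OF vsK, of brK xs] by simp
    also have "\<dots> = Phi sD g (gen xs)" by (rule key[OF free_vs_gen[OF l]])
    also have "\<dots> = brD (map t xs)" using Phi_gen'[OF vsD, of g xs] by (simp add: g_def)
    also have "\<dots> = brD (map h xs)" by (rule ceq) (use l in \<open>auto simp: pt ph\<close>)
    finally show ?thesis .
  qed
  have hal: "h (\<alpha>K x) = \<alpha>D (h x)" for x
  proof -
    interpret P: vector_space_pair sK sD by (simp add: vector_space_pair_def vsK vsD)
    have l1: "Vector_Spaces.linear sK sD (h \<circ> \<alpha>K)" by (rule Vector_Spaces.linear_compose[OF laK lh])
    have l2: "Vector_Spaces.linear sK sD (\<alpha>D \<circ> h)" by (rule Vector_Spaces.linear_compose[OF lh laD])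
    have br: "(h \<circ> \<alpha>K) y = (\<alpha>D \<circ> h) y" if yin: "y \<in> {brK xs |xs. length xs = n}" for y
    proof -
      obtain xs where y: "y = brK xs" and l: "length xs = n" using yin by blast
      have "(h \<circ> \<alpha>K) y = brD (map h (map \<alpha>K xs))" using y l by (simp add: aK hbr)
      also have "\<dots> = brD (map \<alpha>D (map h xs))" by (rule ceq) (use l in \<open>auto simp: ph pial pal\<close>)
      also have "\<dots> = (\<alpha>D \<circ> h) y" using y l by (simp add: aD hbr)
      finally show ?thesis .
    qed
    have "x \<in> P.vs1.span {brK xs |xs. length xs = n}" using H0 by (simp add: HL0_zero_def)
    then have "(h \<circ> \<alpha>K) x = (\<alpha>D \<circ> h) x"
      using vector_space_pair.linear_eq_on_span[OF P.vector_space_pair_axioms l1 l2, of "{brK xs |xs. length xs = n}" x] br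
      by blast
    then show ?thesis by simp
  qed
  show ?thesis
  proof (intro exI conjI)
    show "hl_hom sK brK \<alpha>K sD brD \<alpha>D n h" unfolding hl_hom_def using lh hbr hal by blast
    show "p \<circ> h = \<pi>" using ph by (simp add: fun_eq_iff)
  qed
qed


theorem theorem3p11:
  fixes sK :: "'k::field \<Rightarrow> 'b::ab_group_add \<Rightarrow> 'b" and brK :: "'b list \<Rightarrow> 'b" and \<alpha>K :: "'b \<Rightarrow> 'b"
    and sL :: "'k \<Rightarrow> 'c::ab_group_add \<Rightarrow> 'c" and brL :: "'c list \<Rightarrow> 'c" and \<alpha>L :: "'c \<Rightarrow> 'c"
    and \<pi> :: "'b \<Rightarrow> 'c" and n :: nat
  assumes "n \<ge> 2"
    and "hom_leibniz sK n brK \<alpha>K"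
    and "HL0_zero sK n brK"
    and "HL1_zero sK n brK \<alpha>K"
    and "central_ext sK brK \<alpha>K sL brL \<alpha>L n \<pi>"
  shows "univ_central_ext_wrt sK brK \<alpha>K sL brL \<alpha>L n \<pi> TYPE('d::ab_group_add)"
  unfolding univ_central_ext_wrt_def
proof (intro conjI allI impI)
  show "central_ext sK brK \<alpha>K sL brL \<alpha>L n \<pi>" by fact
next
  fix sD :: "'k \<Rightarrow> 'd \<Rightarrow> 'd" and brD \<alpha>D \<pi>'
  assume cD: "central_ext sD brD \<alpha>D sL brL \<alpha>L n \<pi>'"
  have n1: "n \<ge> 1" using assms(1) by simp
  obtain h where h: "hl_hom sK brK \<alpha>K sD brD \<alpha>D n h \<and> \<pi>' \<circ> h = \<pi>"
    using exist[OF n1 assms(2,3,4,5) cD] by blast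
  show "\<exists>!h. hl_hom sK brK \<alpha>K sD brD \<alpha>D n h \<and> \<pi>' \<circ> h = \<pi>"
  proof (rule ex1I[of _ h])
    show "hl_hom sK brK \<alpha>K sD brD \<alpha>D n h \<and> \<pi>' \<circ> h = \<pi>" by (rule h)
  next
    fix h2 assume h2: "hl_hom sK brK \<alpha>K sD brD \<alpha>D n h2 \<and> \<pi>' \<circ> h2 = \<pi>"
    show "h2 = h"
      by (rule uniq[OF assms(2,3) cD]) (use h h2 in auto)
  qed
qed

end
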